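(* Fix $d,n\ge1$, $C_{\mathsf{MSE}}>0$ and set $C_0=C_{\mathsf{MSE}}d$. Suppose there exist a probability measure $\nu$ on $\mathbb R$ and a constant $c_{\mathrm{sc}}>0$ with the following property: for every random element $W$ (taking values in some measurable space $\mathcal W$) whose law does not depend on $\theta$, and every measurable $g\colon\mathbb R^n\times\mathcal W\to\mathbb R$, if, with $Z_1,\dots,Z_n$ i.i.d. $\mathcal N(\theta,1)$ independent of $W$, one has $\sup_{\theta\in\mathbb R}\mathbb E[(g(Z,W)-\theta)^2]\le C_0/n$, then $\int\mathrm{Var}_\theta(g(Z,W))\,d\nu(\theta)\ge c_{\mathrm{sc}}/n$ (variance over both $Z$ and $W$). Then every measurable $f\colon(\mathbb R^d)^n\to\mathbb R^d$ with $\sup_{\mu\in\mathbb R^d}\mathbb E_{X\sim\mathcal N(\mu,\mathbb I_d)^{\otimes n}}\|f(X)-\mu\|_2^2\le C_{\mathsf{MSE}}\frac dn$ admits $\mu^*\in\mathbb R^d$ with $\mathrm{Var}_{\mu^*}(f)\ge c_{\mathrm{sc}}\frac dn$.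
   Context: $\mathrm{Var}_\mu(f)=\mathbb E_X\|f(X)-\mathbb E_Xf(X)\|_2^2$ for $X\sim\mathcal N(\mu,\mathbb I_d)^{\otimes n}$. *)

theory Defs
  imports "HOL-Probability.Probability"
begin

definition gauss1 :: "real \<Rightarrow> real measure" where
  "gauss1 m = density lborel (normal_density m 1)"

definition gauss_n :: "real \<Rightarrow> ('n::finite \<Rightarrow> real) measure" where
  "gauss_n \<theta> = PiM UNIV (\<lambda>_. gauss1 \<theta>)"

text \<open>N(mu, I_d)^{tensor n} on (R^d)^n; a point of R^d is a function 'd => real,
  a sample X is a function 'n => 'd => real (X k = k-th sample).\<close>
definition gauss_sample :: "('d::finite \<Rightarrow> real) \<Rightarrow> ('n::finite \<Rightarrow> 'd \<Rightarrow> real) measure" where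
  "gauss_sample \<mu> = PiM UNIV (\<lambda>_. PiM UNIV (\<lambda>i. gauss1 (\<mu> i)))"

definition sqnorm :: "('d::finite \<Rightarrow> real) \<Rightarrow> real" where
  "sqnorm v = (\<Sum>i\<in>UNIV. (v i)\<^sup>2)"

definition vmean :: "'a measure \<Rightarrow> ('a \<Rightarrow> 'd::finite \<Rightarrow> real) \<Rightarrow> 'd \<Rightarrow> real" where
  "vmean M f = (\<lambda>i. \<integral>x. f x i \<partial>M)"

definition vvar :: "'a measure \<Rightarrow> ('a \<Rightarrow> 'd::finite \<Rightarrow> real) \<Rightarrow> ennreal" where
  "vvar M f = (\<integral>\<^sup>+x. ennreal (sqnorm (\<lambda>i. f x i - vmean M f i)) \<partial>M)"

definition svar :: "'a measure \<Rightarrow> ('a \<Rightarrow> real) \<Rightarrow> ennreal" where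
  "svar M g = (\<integral>\<^sup>+x. ennreal ((g x - (\<integral>y. g y \<partial>M))\<^sup>2) \<partial>M)"

end

theory Submission
  imports Defs
begin


lemma gauss1_prob[simp]: "prob_space (gauss1 m)"
  unfolding gauss1_def by (rule prob_space_normal_density) simp

lemma sets_gauss1[simp, measurable_cong]: "sets (gauss1 m) = sets borel"
  unfolding gauss1_def by simp

lemma space_gauss1[simp]: "space (gauss1 m) = UNIV"
  unfolding gauss1_def by simp

lemma gauss1_shift: "gauss1 m = distr (gauss1 0) borel (\<lambda>x. x + m)"
proof (rule measure_eqI)
  show "sets (gauss1 m) = sets (distr (gauss1 0) borel (\<lambda>x. x + m))" by simp
  fix A assume A: "A \<in> sets (gauss1 m)"
  hence Ab[measurable]: "A \<in> sets borel" by simp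
  have pre[measurable]: "(\<lambda>x. x + m) -` A \<in> sets borel"
    by (rule measurable_sets_borel[OF _ Ab]) simp
  have "emeasure (gauss1 m) A = (\<integral>\<^sup>+y. ennreal (normal_density m 1 y) * indicator A y \<partial>lborel)"
    unfolding gauss1_def using Ab by (simp add: emeasure_density)
  also have "\<dots> = (\<integral>\<^sup>+y. ennreal (normal_density m 1 y) * indicator A y \<partial>(distr lborel borel ((+) m)))"
    by (simp add: lborel_distr_plus)
  also have "\<dots> = (\<integral>\<^sup>+x. ennreal (normal_density m 1 (m + x)) * indicator A (m + x) \<partial>lborel)"
    by (subst nn_integral_distr) auto
  also have "\<dots> = (\<integral>\<^sup>+x. ennreal (normal_density 0 1 x) * indicator ((\<lambda>x. x + m) -` A) x \<partial>lborel)"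
    by (intro nn_integral_cong) (simp add: normal_density_def indicator_def add.commute)
  also have "\<dots> = emeasure (gauss1 0) ((\<lambda>x. x + m) -` A)"
    unfolding gauss1_def by (subst emeasure_density) auto
  also have "\<dots> = emeasure (distr (gauss1 0) borel (\<lambda>x. x + m)) A"
    by (subst emeasure_distr) auto
  finally show "emeasure (gauss1 m) A = emeasure (distr (gauss1 0) borel (\<lambda>x. x + m)) A" .
qed

lemma emeasure_PiM_prob:
  assumes "\<And>i. prob_space (M i)" "finite I" "\<And>i. i \<in> I \<Longrightarrow> A i \<in> sets (M i)"
  shows "emeasure (PiM I M) (PiE I A) = (\<Prod>i\<in>I. emeasure (M i) (A i))"
proof -
  interpret product_prob_space M by (intro product_prob_spaceI assms)
  show ?thesis using assms by (intro emeasure_PiM) auto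
qed

lemma box_emeasure:
  fixes L :: "'n::finite \<Rightarrow> 'd::finite \<Rightarrow> real measure"
  assumes P: "\<And>k i. prob_space (L k i)" and S: "\<And>k i. sets (L k i) = sets borel"
    and A: "\<And>k i. A k i \<in> sets borel"
  shows "emeasure (PiM UNIV (\<lambda>k. PiM UNIV (\<lambda>i. L k i))) {X. \<forall>k i. X k i \<in> A k i}
     = (\<Prod>k\<in>UNIV. \<Prod>i\<in>UNIV. emeasure (L k i) (A k i))"
proof -
  have eq: "{X. \<forall>k i. X k i \<in> A k i} = PiE UNIV (\<lambda>k. PiE UNIV (\<lambda>i. A k i))"
    by (auto simp: PiE_def extensional_def Pi_def)
  have "emeasure (PiM UNIV (\<lambda>k. PiM UNIV (\<lambda>i. L k i))) (PiE UNIV (\<lambda>k. PiE UNIV (\<lambda>i. A k i)))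
     = (\<Prod>k\<in>UNIV. emeasure (PiM UNIV (\<lambda>i. L k i)) (PiE UNIV (\<lambda>i. A k i)))"
    using A S P by (intro emeasure_PiM_prob prob_space_PiM) (auto intro!: sets_PiM_I_finite)
  also have "\<dots> = (\<Prod>k\<in>UNIV. \<Prod>i\<in>UNIV. emeasure (L k i) (A k i))"
  proof (rule prod.cong[OF refl])
    fix k
    show "emeasure (PiM UNIV (\<lambda>i. L k i)) (PiE UNIV (\<lambda>i. A k i)) = (\<Prod>i\<in>UNIV. emeasure (L k i) (A k i))"
      using A S P by (intro emeasure_PiM_prob) auto
  qed
  finally show ?thesis using eq by simp
qed

lemma meas_entry:
  "(\<lambda>X. X k i) \<in> borel_measurable (PiM UNIV (\<lambda>_::'n::finite. PiM UNIV (\<lambda>_::'d::finite. borel)))"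
  by (rule measurable_compose[of "\<lambda>X. X k" _ "PiM UNIV (\<lambda>_. borel)"])
     (rule measurable_component_singleton, simp)+

lemma distr_flat:
  fixes L :: "'n::finite \<Rightarrow> 'd::finite \<Rightarrow> real measure"
    and M :: "('n \<Rightarrow> 'd \<Rightarrow> real) measure"
  assumes P: "\<And>k i. prob_space (L k i)" and S: "\<And>k i. sets (L k i) = sets borel"
    and SM: "sets M = sets (PiM UNIV (\<lambda>_::'n. PiM UNIV (\<lambda>_::'d. borel)))"
    and box: "\<And>A. (\<And>k i. A k i \<in> sets borel) \<Longrightarrow>
       emeasure M {X \<in> space M. \<forall>k i. X k i \<in> A k i} = (\<Prod>k\<in>UNIV. \<Prod>i\<in>UNIV. emeasure (L k i) (A k i))"
  shows "distr M (PiM UNIV (\<lambda>p. L (fst p) (snd p))) (\<lambda>X p. X (fst p) (snd p)) = PiM UNIV (\<lambda>p. L (fst p) (snd p))"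
proof -
  interpret pp: product_prob_space "\<lambda>p. L (fst p) (snd p)"
    by (intro product_prob_spaceI P)
  have meas: "(\<lambda>X p. X (fst p) (snd p)) \<in> measurable M (PiM UNIV (\<lambda>p. L (fst p) (snd p)))"
  proof -
    have "(\<lambda>X p. X (fst p) (snd p)) \<in> measurable (PiM UNIV (\<lambda>_::'n. PiM UNIV (\<lambda>_::'d. borel))) (PiM UNIV (\<lambda>p::'n\<times>'d. borel))"
      by (rule measurable_abs_UNIV) (rule meas_entry)
    moreover have SF': "sets (PiM UNIV (\<lambda>p. L (fst p) (snd p))) = sets (PiM UNIV (\<lambda>p::'n\<times>'d. borel))"
      by (intro sets_PiM_cong) (auto simp: S)
    ultimately show ?thesis by (simp only: measurable_cong_sets[OF SM SF'])
  qed
  show ?thesis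
  proof (rule pp.PiM_eqI)
    show "finite (UNIV :: ('n\<times>'d) set)" by simp
    show "sets (distr M (PiM UNIV (\<lambda>p. L (fst p) (snd p))) (\<lambda>X p. X (fst p) (snd p))) = sets (PiM UNIV (\<lambda>p. L (fst p) (snd p)))"
      by simp
    fix A :: "'n\<times>'d \<Rightarrow> real set" assume A: "\<And>p. p \<in> UNIV \<Longrightarrow> A p \<in> sets (L (fst p) (snd p))"
    have A': "\<And>k i. A (k,i) \<in> sets borel" using A S by (metis fst_conv snd_conv UNIV_I)
    have "emeasure (distr M (PiM UNIV (\<lambda>p. L (fst p) (snd p))) (\<lambda>X p. X (fst p) (snd p))) (PiE UNIV A)
        = emeasure M ((\<lambda>X p. X (fst p) (snd p)) -` PiE UNIV A \<inter> space M)"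
      using A meas by (intro emeasure_distr) (auto intro!: sets_PiM_I_finite)
    also have "(\<lambda>X p. X (fst p) (snd p)) -` PiE UNIV A \<inter> space M = {X \<in> space M. \<forall>k i. X k i \<in> A (k,i)}"
      by (auto simp: PiE_def Pi_def extensional_def)
    also have "emeasure M \<dots> = (\<Prod>k\<in>UNIV. \<Prod>i\<in>UNIV. emeasure (L k i) (A (k,i)))"
      using box[of "\<lambda>k i. A (k,i)"] A' by simp
    also have "\<dots> = (\<Prod>p\<in>UNIV. emeasure (L (fst p) (snd p)) (A p))"
      by (subst prod.cartesian_product) (simp add: case_prod_beta)
    finally show "emeasure (distr M (PiM UNIV (\<lambda>p. L (fst p) (snd p))) (\<lambda>X p. X (fst p) (snd p))) (PiE UNIV A)
       = (\<Prod>p\<in>UNIV. emeasure (L (fst p) (snd p)) (A p))" .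
  qed
qed

lemma nest_eq:
  fixes L :: "'n::finite \<Rightarrow> 'd::finite \<Rightarrow> real measure"
    and M :: "('n \<Rightarrow> 'd \<Rightarrow> real) measure"
  assumes P: "\<And>k i. prob_space (L k i)" and S: "\<And>k i. sets (L k i) = sets borel"
    and SM: "sets M = sets (PiM UNIV (\<lambda>_::'n. PiM UNIV (\<lambda>_::'d. borel)))"
    and box: "\<And>A. (\<And>k i. A k i \<in> sets borel) \<Longrightarrow>
       emeasure M {X \<in> space M. \<forall>k i. X k i \<in> A k i} = (\<Prod>k\<in>UNIV. \<Prod>i\<in>UNIV. emeasure (L k i) (A k i))"
  shows "M = PiM UNIV (\<lambda>k. PiM UNIV (\<lambda>i. L k i))"
proof -
  define N where "N = PiM UNIV (\<lambda>k. PiM UNIV (\<lambda>i. L k i))"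
  define F where "F = PiM UNIV (\<lambda>p. L (fst p) (snd p))"
  have SN: "sets N = sets (PiM UNIV (\<lambda>_::'n. PiM UNIV (\<lambda>_::'d. borel)))"
    unfolding N_def using S by (intro sets_PiM_cong) auto
  have spL: "space (L k i) = UNIV" for k i using sets_eq_imp_space_eq[OF S[of k i]] by simp
  have spN: "space N = UNIV"
    unfolding N_def using spL by (simp add: space_PiM PiE_def extensional_def Pi_def)
  have boxN: "emeasure N {X \<in> space N. \<forall>k i. X k i \<in> A k i} = (\<Prod>k\<in>UNIV. \<Prod>i\<in>UNIV. emeasure (L k i) (A k i))"
    if "\<And>k i. A k i \<in> sets borel" for A
    using box_emeasure[OF P S that] unfolding N_def by (simp add: spN[unfolded N_def])
  have dM: "distr M F (\<lambda>X p. X (fst p) (snd p)) = F"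
    unfolding F_def by (rule distr_flat[OF P S SM box])
  have dN: "distr N F (\<lambda>X p. X (fst p) (snd p)) = F"
    unfolding F_def by (rule distr_flat[OF P S SN boxN])
  have m1: "(\<lambda>X p. X (fst p) (snd p)) \<in> measurable (PiM UNIV (\<lambda>_::'n. PiM UNIV (\<lambda>_::'d. borel))) (PiM UNIV (\<lambda>p::'n\<times>'d. borel))"
    by (rule measurable_abs_UNIV) (rule meas_entry)
  have m2: "(\<lambda>Y k i. Y (k, i)) \<in> measurable (PiM UNIV (\<lambda>p::'n\<times>'d. borel)) (PiM UNIV (\<lambda>_::'n. PiM UNIV (\<lambda>_::'d. borel)))"
    by (intro measurable_abs_UNIV measurable_component_singleton) simp
  have SF: "sets F = sets (PiM UNIV (\<lambda>p::'n\<times>'d. borel))"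
    unfolding F_def using S by (intro sets_PiM_cong) auto
  have bck: "distr (distr K F (\<lambda>X p. X (fst p) (snd p))) K (\<lambda>Y k i. Y (k, i)) = K"
    if SK: "sets K = sets (PiM UNIV (\<lambda>_::'n. PiM UNIV (\<lambda>_::'d. borel)))" for K :: "('n \<Rightarrow> 'd \<Rightarrow> real) measure"
  proof -
    have a: "(\<lambda>X p. X (fst p) (snd p)) \<in> measurable K F"
      using m1 by (simp only: measurable_cong_sets[OF SK SF])
    have b: "(\<lambda>Y k i. Y (k, i)) \<in> measurable F K"
      using m2 by (simp only: measurable_cong_sets[OF SF SK])
    have "distr (distr K F (\<lambda>X p. X (fst p) (snd p))) K (\<lambda>Y k i. Y (k, i)) = distr K K ((\<lambda>Y k i. Y (k, i)) \<circ> (\<lambda>X p. X (fst p) (snd p)))"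
      by (rule distr_distr[OF b a])
    also have "\<dots> = distr K K (\<lambda>x. x)" by (simp add: o_def)
    also have "\<dots> = K" by (rule distr_id)
    finally show ?thesis .
  qed
  have "M = distr (distr M F (\<lambda>X p. X (fst p) (snd p))) M (\<lambda>Y k i. Y (k, i))"
    using bck[OF SM] by simp
  also have "\<dots> = distr F M (\<lambda>Y k i. Y (k, i))" using dM by simp
  also have "\<dots> = distr F N (\<lambda>Y k i. Y (k, i))"
    by (rule distr_cong) (use SM SN in auto)
  also have "\<dots> = distr (distr N F (\<lambda>X p. X (fst p) (snd p))) N (\<lambda>Y k i. Y (k, i))" using dN by simp
  also have "\<dots> = N" by (rule bck[OF SN])
  finally show ?thesis unfolding N_def .
qed



lemma space_NB: "space (PiM UNIV (\<lambda>_::'n::finite. PiM UNIV (\<lambda>_::'d::finite. borel :: real measure))) = UNIV"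
  by (simp add: space_PiM PiE_def extensional_def Pi_def)

lemma sets_gs[measurable_cong]: "sets (gauss_sample \<mu> :: ('n::finite \<Rightarrow> 'd::finite \<Rightarrow> real) measure)
   = sets (PiM UNIV (\<lambda>_::'n. PiM UNIV (\<lambda>_::'d. borel)))"
  unfolding gauss_sample_def by (intro sets_PiM_cong refl) simp

lemma space_gs[simp]: "space (gauss_sample \<mu> :: ('n::finite \<Rightarrow> 'd::finite \<Rightarrow> real) measure) = UNIV"
  using sets_eq_imp_space_eq[OF sets_gs] space_NB by metis

lemma prob_gs[simp]: "prob_space (gauss_sample \<mu>)"
  unfolding gauss_sample_def by (intro prob_space_PiM) simp

lemma sets_gn[measurable_cong]: "sets (gauss_n \<theta> :: ('n::finite \<Rightarrow> real) measure) = sets (PiM UNIV (\<lambda>_::'n. borel))"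
  unfolding gauss_n_def by (intro sets_PiM_cong refl) simp

lemma prob_gn[simp]: "prob_space (gauss_n \<theta>)"
  unfolding gauss_n_def by (intro prob_space_PiM) simp

lemma box_sets:
  fixes A :: "'n::finite \<Rightarrow> 'd::finite \<Rightarrow> real set"
  assumes "\<And>k i. A k i \<in> sets borel"
  shows "{X \<in> space (PiM UNIV (\<lambda>_::'n::finite. PiM UNIV (\<lambda>_::'d::finite. borel))). \<forall>k i. X k i \<in> A k i}
     \<in> sets (PiM UNIV (\<lambda>_::'n. PiM UNIV (\<lambda>_::'d. borel)))"
proof -
  have "{X \<in> space (PiM UNIV (\<lambda>_::'n::finite. PiM UNIV (\<lambda>_::'d::finite. borel))). \<forall>k i. X k i \<in> A k i}
     = PiE UNIV (\<lambda>k. PiE UNIV (\<lambda>i. A k i))"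
    by (auto simp: space_NB PiE_def extensional_def Pi_def)
  thus ?thesis using assms by (auto intro!: sets_PiM_I_finite)
qed

lemma meas_shift:
  fixes \<mu> :: "'d::finite \<Rightarrow> real"
  shows
  "(\<lambda>X k i. X k i + \<mu> i) \<in> measurable (PiM UNIV (\<lambda>_::'n::finite. PiM UNIV (\<lambda>_::'d::finite. borel)))
       (PiM UNIV (\<lambda>_::'n. PiM UNIV (\<lambda>_::'d. borel)))"
  by (intro measurable_abs_UNIV borel_measurable_add meas_entry measurable_const) simp

lemma gs_shift:
  "gauss_sample \<mu> = distr (gauss_sample (\<lambda>_. 0) :: ('n::finite \<Rightarrow> 'd::finite \<Rightarrow> real) measure)
      (PiM UNIV (\<lambda>_::'n. PiM UNIV (\<lambda>_::'d. borel))) (\<lambda>X k i. X k i + \<mu> i)"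
proof -
  let ?NB = "PiM UNIV (\<lambda>_::'n. PiM UNIV (\<lambda>_::'d. borel :: real measure))"
  let ?M = "distr (gauss_sample (\<lambda>_. 0) :: ('n \<Rightarrow> 'd \<Rightarrow> real) measure) ?NB (\<lambda>X k i. X k i + \<mu> i)"
  have ms: "(\<lambda>X k i. X k i + \<mu> i) \<in> measurable (gauss_sample (\<lambda>_. 0) :: ('n \<Rightarrow> 'd \<Rightarrow> real) measure) ?NB"
    using meas_shift by (simp add: measurable_cong_sets[OF sets_gs refl])
  have "?M = PiM UNIV (\<lambda>k. PiM UNIV (\<lambda>i. gauss1 (\<mu> i)))"
  proof (rule nest_eq)
    show "sets ?M = sets ?NB" by simp
    fix A :: "'n \<Rightarrow> 'd \<Rightarrow> real set" assume A: "\<And>k i. A k i \<in> sets borel"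
    have Ai: "(\<lambda>x. x + \<mu> i) -` A k i \<in> sets borel" for k i
      by (rule measurable_sets_borel[OF _ A]) simp
    have "emeasure ?M {X \<in> space ?M. \<forall>k i. X k i \<in> A k i}
       = emeasure (gauss_sample (\<lambda>_. 0)) ((\<lambda>X k i. X k i + \<mu> i) -` {X \<in> space ?M. \<forall>k i. X k i \<in> A k i} \<inter> UNIV)"
      using box_sets[OF A] ms by (subst emeasure_distr) auto
    also have "(\<lambda>X k i. X k i + \<mu> i) -` {X \<in> space ?M. \<forall>k i. X k i \<in> A k i} \<inter> UNIV
       = {X. \<forall>k i. X k i \<in> (\<lambda>x. x + \<mu> i) -` A k i}"
      by (auto simp: space_NB)
    also have "emeasure (gauss_sample (\<lambda>_. 0)) \<dots> = (\<Prod>k\<in>UNIV. \<Prod>i\<in>UNIV. emeasure (gauss1 0) ((\<lambda>x. x + \<mu> i) -` A k i))"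
      unfolding gauss_sample_def using Ai by (intro box_emeasure) auto
    also have "\<dots> = (\<Prod>k\<in>UNIV. \<Prod>i\<in>UNIV. emeasure (gauss1 (\<mu> i)) (A k i))"
    proof (intro prod.cong refl)
      fix k i
      show "emeasure (gauss1 0) ((\<lambda>x. x + \<mu> i) -` A k i) = emeasure (gauss1 (\<mu> i)) (A k i)"
        using A by (subst gauss1_shift[of "\<mu> i"]) (subst emeasure_distr, auto)
    qed
    finally show "emeasure ?M {X \<in> space ?M. \<forall>k i. X k i \<in> A k i} = (\<Prod>k\<in>UNIV. \<Prod>i\<in>UNIV. emeasure (gauss1 (\<mu> i)) (A k i))" .
  qed auto
  thus ?thesis unfolding gauss_sample_def by simp
qed

definition asm :: "'d \<Rightarrow> ('n \<Rightarrow> real) \<times> ('n \<Rightarrow> 'd \<Rightarrow> real) \<Rightarrow> 'n \<Rightarrow> 'd \<Rightarrow> real" where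
  "asm j zw = (\<lambda>k i. if i = j then fst zw k else snd zw k i)"

lemma meas_asm:
  "asm j \<in> measurable (PiM UNIV (\<lambda>_::'n::finite. borel) \<Otimes>\<^sub>M PiM UNIV (\<lambda>_::'n. PiM UNIV (\<lambda>_::'d::finite. borel)))
       (PiM UNIV (\<lambda>_::'n. PiM UNIV (\<lambda>_::'d. borel)))"
  unfolding asm_def
proof (intro measurable_abs_UNIV)
  fix k :: 'n and i :: 'd
  show "(\<lambda>zw. if i = j then fst zw k else snd zw k i) \<in> borel_measurable (PiM UNIV (\<lambda>_::'n::finite. borel) \<Otimes>\<^sub>M PiM UNIV (\<lambda>_::'n. PiM UNIV (\<lambda>_::'d::finite. borel)))"
    by (cases "i = j") (auto intro!: measurable_compose[OF measurable_fst measurable_component_singleton]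
           measurable_compose[OF measurable_snd meas_entry])
qed

lemma gs_asm:
  "distr (gauss_n \<theta> \<Otimes>\<^sub>M gauss_sample \<mu>) (PiM UNIV (\<lambda>_::'n::finite. PiM UNIV (\<lambda>_::'d::finite. borel))) (asm j)
    = gauss_sample (\<mu>(j := \<theta>))"
proof -
  let ?NB = "PiM UNIV (\<lambda>_::'n. PiM UNIV (\<lambda>_::'d. borel :: real measure))"
  let ?P = "gauss_n \<theta> \<Otimes>\<^sub>M (gauss_sample \<mu> :: ('n \<Rightarrow> 'd \<Rightarrow> real) measure)"
  let ?M = "distr ?P ?NB (asm j)"
  have ms: "asm j \<in> measurable ?P ?NB"
    using meas_asm by (simp add: measurable_cong_sets[OF sets_pair_measure_cong[OF sets_gn sets_gs] refl])
  interpret S2: prob_space "gauss_sample \<mu> :: ('n \<Rightarrow> 'd \<Rightarrow> real) measure" by simp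
  have spn: "space (gauss_n \<theta> :: ('n \<Rightarrow> real) measure) = UNIV"
    using sets_eq_imp_space_eq[OF sets_gn] by (simp add: space_PiM PiE_def extensional_def Pi_def)
  have "?M = PiM UNIV (\<lambda>k. PiM UNIV (\<lambda>i. gauss1 ((\<mu>(j := \<theta>)) i)))"
  proof (rule nest_eq)
    show "sets ?M = sets ?NB" by simp
    fix A :: "'n \<Rightarrow> 'd \<Rightarrow> real set" assume A: "\<And>k i. A k i \<in> sets borel"
    define A' where "A' = (\<lambda>k i. if i = j then UNIV else A k i)"
    have A'b: "\<And>k i. A' k i \<in> sets borel" using A by (simp add: A'_def)
    have "emeasure ?M {X \<in> space ?M. \<forall>k i. X k i \<in> A k i}
       = emeasure ?P (asm j -` {X \<in> space ?M. \<forall>k i. X k i \<in> A k i} \<inter> space ?P)"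
      using box_sets[OF A] ms by (subst emeasure_distr) auto
    also have "asm j -` {X \<in> space ?M. \<forall>k i. X k i \<in> A k i} \<inter> space ?P
       = PiE UNIV (\<lambda>k. A k j) \<times> {w. \<forall>k i. w k i \<in> A' k i}"
      by (auto simp: space_NB space_pair_measure spn asm_def A'_def PiE_def extensional_def Pi_def)
    also have "emeasure ?P \<dots> = emeasure (gauss_n \<theta>) (PiE UNIV (\<lambda>k. A k j))
         * emeasure (gauss_sample \<mu>) {w. \<forall>k i. w k i \<in> A' k i}"
    proof (rule S2.emeasure_pair_measure_Times)
      show "PiE UNIV (\<lambda>k. A k j) \<in> sets (gauss_n \<theta>)"
        using A by (auto simp add: sets_gn intro!: sets_PiM_I_finite)
      have "{w. \<forall>k i. w k i \<in> A' k i} = {X \<in> space ?NB. \<forall>k i. X k i \<in> A' k i}"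
        by (simp add: space_NB)
      thus "{w. \<forall>k i. w k i \<in> A' k i} \<in> sets (gauss_sample \<mu>)"
        using box_sets[OF A'b] by (simp add: sets_gs)
    qed
    also have "emeasure (gauss_n \<theta>) (PiE UNIV (\<lambda>k. A k j)) = (\<Prod>k\<in>UNIV. emeasure (gauss1 \<theta>) (A k j))"
      unfolding gauss_n_def using A by (intro emeasure_PiM_prob) auto
    also have "emeasure (gauss_sample \<mu>) {w. \<forall>k i. w k i \<in> A' k i}
        = (\<Prod>k\<in>UNIV. \<Prod>i\<in>UNIV. emeasure (gauss1 (\<mu> i)) (A' k i))"
      unfolding gauss_sample_def using A'b by (intro box_emeasure) auto
    also have "(\<Prod>k\<in>UNIV. emeasure (gauss1 \<theta>) (A k j)) * \<dots>
       = (\<Prod>k\<in>UNIV. emeasure (gauss1 \<theta>) (A k j) * (\<Prod>i\<in>UNIV. emeasure (gauss1 (\<mu> i)) (A' k i)))"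
      by (rule prod.distrib[symmetric])
    also have "\<dots> = (\<Prod>k\<in>UNIV. \<Prod>i\<in>UNIV. emeasure (gauss1 ((\<mu>(j := \<theta>)) i)) (A k i))"
    proof (rule prod.cong[OF refl])
      fix k
      have e1: "(\<Prod>i\<in>UNIV. emeasure (gauss1 (\<mu> i)) (A' k i)) = (\<Prod>i\<in>UNIV-{j}. emeasure (gauss1 (\<mu> i)) (A k i))"
      proof -
        have "(\<Prod>i\<in>UNIV. emeasure (gauss1 (\<mu> i)) (A' k i)) = emeasure (gauss1 (\<mu> j)) (A' k j) * (\<Prod>i\<in>UNIV-{j}. emeasure (gauss1 (\<mu> i)) (A' k i))"
          by (rule prod.remove) auto
        also have "emeasure (gauss1 (\<mu> j)) (A' k j) = 1"
          using prob_space.emeasure_space_1[OF gauss1_prob[of "\<mu> j"]] by (simp add: A'_def)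
        also have "(\<Prod>i\<in>UNIV-{j}. emeasure (gauss1 (\<mu> i)) (A' k i)) = (\<Prod>i\<in>UNIV-{j}. emeasure (gauss1 (\<mu> i)) (A k i))"
          by (rule prod.cong) (auto simp: A'_def)
        finally show ?thesis by simp
      qed
      have e2: "(\<Prod>i\<in>UNIV. emeasure (gauss1 ((\<mu>(j := \<theta>)) i)) (A k i)) = emeasure (gauss1 \<theta>) (A k j) * (\<Prod>i\<in>UNIV-{j}. emeasure (gauss1 (\<mu> i)) (A k i))"
      proof -
        have "(\<Prod>i\<in>UNIV. emeasure (gauss1 ((\<mu>(j := \<theta>)) i)) (A k i)) = emeasure (gauss1 ((\<mu>(j := \<theta>)) j)) (A k j) * (\<Prod>i\<in>UNIV-{j}. emeasure (gauss1 ((\<mu>(j := \<theta>)) i)) (A k i))"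
          by (rule prod.remove) auto
        also have "(\<Prod>i\<in>UNIV-{j}. emeasure (gauss1 ((\<mu>(j := \<theta>)) i)) (A k i)) = (\<Prod>i\<in>UNIV-{j}. emeasure (gauss1 (\<mu> i)) (A k i))"
          by (rule prod.cong) auto
        finally show ?thesis by simp
      qed
      show "emeasure (gauss1 \<theta>) (A k j) * (\<Prod>i\<in>UNIV. emeasure (gauss1 (\<mu> i)) (A' k i)) = (\<Prod>i\<in>UNIV. emeasure (gauss1 ((\<mu>(j := \<theta>)) i)) (A k i))"
        using e1 e2 by simp
    qed
    finally show "emeasure ?M {X \<in> space ?M. \<forall>k i. X k i \<in> A k i} = (\<Prod>k\<in>UNIV. \<Prod>i\<in>UNIV. emeasure (gauss1 ((\<mu>(j := \<theta>)) i)) (A k i))" .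
  qed auto
  thus ?thesis unfolding gauss_sample_def by simp
qed



lemma meas_fj:
  fixes f :: "('n::finite \<Rightarrow> 'd::finite \<Rightarrow> real) \<Rightarrow> ('d \<Rightarrow> real)"
  assumes "f \<in> (PiM UNIV (\<lambda>_. PiM UNIV (\<lambda>_. borel))) \<rightarrow>\<^sub>M PiM UNIV (\<lambda>_. borel)"
  shows "(\<lambda>X. f X j) \<in> borel_measurable (PiM UNIV (\<lambda>_::'n. PiM UNIV (\<lambda>_::'d. borel)))"
  by (rule measurable_compose[OF assms measurable_component_singleton]) simp

lemma vvar_split:
  fixes f :: "('n::finite \<Rightarrow> 'd::finite \<Rightarrow> real) \<Rightarrow> ('d \<Rightarrow> real)"
  assumes "f \<in> (PiM UNIV (\<lambda>_. PiM UNIV (\<lambda>_. borel))) \<rightarrow>\<^sub>M PiM UNIV (\<lambda>_. borel)"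
  shows "vvar (gauss_sample \<mu>) f = (\<Sum>j\<in>UNIV. svar (gauss_sample \<mu>) (\<lambda>X. f X j))"
proof -
  have m: "(\<lambda>X. f X j) \<in> borel_measurable (gauss_sample \<mu>)" for j
    using meas_fj[OF assms] by (simp add: measurable_cong_sets[OF sets_gs refl])
  have "vvar (gauss_sample \<mu>) f = (\<integral>\<^sup>+X. (\<Sum>j\<in>UNIV. ennreal ((f X j - (\<integral>Y. f Y j \<partial>gauss_sample \<mu>))\<^sup>2)) \<partial>gauss_sample \<mu>)"
    unfolding vvar_def sqnorm_def vmean_def by (intro nn_integral_cong) (simp add: sum_ennreal)
  also have "\<dots> = (\<Sum>j\<in>UNIV. \<integral>\<^sup>+X. ennreal ((f X j - (\<integral>Y. f Y j \<partial>gauss_sample \<mu>))\<^sup>2) \<partial>gauss_sample \<mu>)"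
    using m by (intro nn_integral_sum) auto
  finally show ?thesis unfolding svar_def .
qed

lemma meas_upd:
  fixes j :: "'d::finite"
  shows "(\<lambda>p. (snd p)(j := fst p)) \<in> measurable (N \<Otimes>\<^sub>M PiM (UNIV - {j}) (\<lambda>_. N)) (PiM UNIV (\<lambda>_::'d. N))"
proof -
  have e: "(\<lambda>p. (snd p)(j := fst p)) = (\<lambda>p i. if i = j then fst p else snd p i)"
    by (auto simp: fun_eq_iff)
  show ?thesis unfolding e
  proof (intro measurable_abs_UNIV)
    fix i :: 'd
    show "(\<lambda>p. if i = j then fst p else snd p i) \<in> measurable (N \<Otimes>\<^sub>M PiM (UNIV - {j}) (\<lambda>_. N)) N"
      by (cases "i = j") (auto intro!: measurable_compose[OF measurable_snd measurable_component_singleton])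
  qed
qed

lemma meas_V:
  fixes f :: "('n::finite \<Rightarrow> 'd::finite \<Rightarrow> real) \<Rightarrow> ('d \<Rightarrow> real)"
  assumes fm: "f \<in> (PiM UNIV (\<lambda>_. PiM UNIV (\<lambda>_. borel))) \<rightarrow>\<^sub>M PiM UNIV (\<lambda>_. borel)"
  shows "(\<lambda>\<mu>. svar (gauss_sample \<mu>) (\<lambda>X. f X j)) \<in> borel_measurable (PiM UNIV (\<lambda>_::'d. borel))"
proof -
  let ?NB = "PiM UNIV (\<lambda>_::'n. PiM UNIV (\<lambda>_::'d. borel :: real measure))"
  let ?PD = "PiM UNIV (\<lambda>_::'d. borel :: real measure)"
  let ?S0 = "gauss_sample (\<lambda>_. 0) :: ('n \<Rightarrow> 'd \<Rightarrow> real) measure"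
  interpret S0: prob_space ?S0 by simp
  have fj: "(\<lambda>X. f X j) \<in> borel_measurable ?NB" by (rule meas_fj[OF fm])
  have sh: "(\<lambda>p. \<lambda>k i. snd p k i + fst p i) \<in> measurable (?PD \<Otimes>\<^sub>M ?S0) ?NB"
  proof (intro measurable_abs_UNIV)
    fix k i
    have a: "(\<lambda>p. snd p k i) \<in> borel_measurable (?PD \<Otimes>\<^sub>M ?S0)"
      by (rule measurable_compose[OF measurable_snd]) (simp add: measurable_cong_sets[OF sets_gs refl] meas_entry)
    have b: "(\<lambda>p. fst p i) \<in> borel_measurable (?PD \<Otimes>\<^sub>M ?S0)"
      by (rule measurable_compose[OF measurable_fst measurable_component_singleton]) simp
    show "(\<lambda>p. snd p k i + fst p i) \<in> borel_measurable (?PD \<Otimes>\<^sub>M ?S0)"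
      using a b by (rule borel_measurable_add)
  qed
  have F: "(\<lambda>p. f (\<lambda>k i. snd p k i + fst p i) j) \<in> borel_measurable (?PD \<Otimes>\<^sub>M ?S0)"
    by (rule measurable_compose[OF sh fj])
  have m: "(\<lambda>\<mu>. \<integral>Y. f (\<lambda>k i. Y k i + \<mu> i) j \<partial>?S0) \<in> borel_measurable ?PD"
    by (rule S0.borel_measurable_lebesgue_integral) (use F in \<open>simp add: case_prod_beta\<close>)
  have G: "(\<lambda>p. ennreal ((f (\<lambda>k i. snd p k i + fst p i) j - (\<integral>Y. f (\<lambda>k i. Y k i + fst p i) j \<partial>?S0))\<^sup>2))
      \<in> borel_measurable (?PD \<Otimes>\<^sub>M ?S0)"
    using F measurable_compose[OF measurable_fst m] by measurable
  have V: "(\<lambda>\<mu>. \<integral>\<^sup>+X. ennreal ((f (\<lambda>k i. X k i + \<mu> i) j - (\<integral>Y. f (\<lambda>k i. Y k i + \<mu> i) j \<partial>?S0))\<^sup>2) \<partial>?S0)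
      \<in> borel_measurable ?PD"
    by (rule S0.borel_measurable_nn_integral) (use G in \<open>simp add: case_prod_beta\<close>)
  have eq: "svar (gauss_sample \<mu>) (\<lambda>X. f X j) =
     (\<integral>\<^sup>+X. ennreal ((f (\<lambda>k i. X k i + \<mu> i) j - (\<integral>Y. f (\<lambda>k i. Y k i + \<mu> i) j \<partial>?S0))\<^sup>2) \<partial>?S0)" for \<mu>
  proof -
    have ms: "(\<lambda>X k i. X k i + \<mu> i) \<in> measurable ?S0 ?NB"
      using meas_shift by (simp add: measurable_cong_sets[OF sets_gs refl])
    have i1: "(\<integral>Y. f Y j \<partial>gauss_sample \<mu>) = (\<integral>Y. f (\<lambda>k i. Y k i + \<mu> i) j \<partial>?S0)"
      by (subst gs_shift[of \<mu>]) (rule integral_distr[OF ms fj])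
    have g0: "(\<lambda>X. ennreal ((f X j - c)\<^sup>2)) \<in> borel_measurable ?NB" for c
      using fj by measurable
    have g: "(\<lambda>X. ennreal ((f X j - c)\<^sup>2)) \<in> borel_measurable (distr ?S0 ?NB (\<lambda>X k i. X k i + \<mu> i))" for c
      using g0[of c] by (simp only: measurable_cong_sets[OF sets_distr refl])
    show ?thesis unfolding svar_def i1
      by (subst gs_shift[of \<mu>]) (rule nn_integral_distr[OF ms g])
  qed
  show ?thesis unfolding eq by (rule V)
qed

theorem lemmaI2:
  fixes C_MSE c_sc :: real
    and \<nu> :: "real measure"
    and f :: "('n::finite \<Rightarrow> 'd::finite \<Rightarrow> real) \<Rightarrow> ('d \<Rightarrow> real)"
  defines "n \<equiv> real CARD('n)" and "d \<equiv> real CARD('d)"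
  defines "C0 \<equiv> C_MSE * d"
  assumes C_pos: "C_MSE > 0"
    and nu_prob: "prob_space \<nu>" and nu_sets: "sets \<nu> = sets borel"
    and c_pos: "c_sc > 0"
    and hyp: "\<And>(PW :: ('n \<Rightarrow> 'd \<Rightarrow> real) measure) (g :: ('n \<Rightarrow> real) \<times> ('n \<Rightarrow> 'd \<Rightarrow> real) \<Rightarrow> real).
        prob_space PW \<Longrightarrow>
        g \<in> borel_measurable (PiM UNIV (\<lambda>_. borel) \<Otimes>\<^sub>M PW) \<Longrightarrow>
        (\<forall>\<theta>. (\<integral>\<^sup>+zw. ennreal ((g zw - \<theta>)\<^sup>2) \<partial>(gauss_n \<theta> \<Otimes>\<^sub>M PW)) \<le> ennreal (C0 / n)) \<Longrightarrow>
        (\<integral>\<^sup>+\<theta>. svar (gauss_n \<theta> \<Otimes>\<^sub>M PW) g \<partial>\<nu>) \<ge> ennreal (c_sc / n)"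
    and f_meas: "f \<in> (PiM UNIV (\<lambda>_. PiM UNIV (\<lambda>_. borel)))
                                       \<rightarrow>\<^sub>M PiM UNIV (\<lambda>_. borel)"
    and f_mse: "\<forall>\<mu>. (\<integral>\<^sup>+X. ennreal (sqnorm (\<lambda>i. f X i - \<mu> i)) \<partial>gauss_sample \<mu>) \<le> ennreal (C_MSE * d / n)"
  shows "\<exists>\<mu>star. vvar (gauss_sample \<mu>star) f \<ge> ennreal (c_sc * d / n)"
proof -
  let ?NB = "PiM UNIV (\<lambda>_::'n. PiM UNIV (\<lambda>_::'d. borel :: real measure))"
  let ?PD = "PiM UNIV (\<lambda>_::'d. borel :: real measure)"
  let ?P = "PiM UNIV (\<lambda>_::'d. \<nu>)"
  define V where "V = (\<lambda>j (\<mu>::'d \<Rightarrow> real). svar (gauss_sample \<mu> :: ('n \<Rightarrow> 'd \<Rightarrow> real) measure) (\<lambda>X. f X j))"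
  have fj: "(\<lambda>X. f X j) \<in> borel_measurable ?NB" for j by (rule meas_fj[OF f_meas])
  have n_pos: "n > 0" unfolding n_def by simp
  have d_pos: "d > 0" unfolding d_def by simp
  have stepB: "(\<integral>\<^sup>+\<theta>. V j (\<mu>(j := \<theta>)) \<partial>\<nu>) \<ge> ennreal (c_sc / n)" for j \<mu>
  proof -
    define g where "g = (\<lambda>zw. f (asm j zw) j)"
    let ?PW = "gauss_sample \<mu> :: ('n \<Rightarrow> 'd \<Rightarrow> real) measure"
    have gm0: "g \<in> borel_measurable (PiM UNIV (\<lambda>_::'n. borel) \<Otimes>\<^sub>M ?NB)"
      unfolding g_def by (rule measurable_compose[OF meas_asm fj])
    have gm: "g \<in> borel_measurable (PiM UNIV (\<lambda>_::'n. borel) \<Otimes>\<^sub>M ?PW)"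
      using gm0 by (simp only: measurable_cong_sets[OF sets_pair_measure_cong[OF refl sets_gs] refl])
    have ma: "asm j \<in> measurable (gauss_n \<theta> \<Otimes>\<^sub>M ?PW) ?NB" for \<theta>
      using meas_asm by (simp only: measurable_cong_sets[OF sets_pair_measure_cong[OF sets_gn sets_gs] refl])
    have D: "distr (gauss_n \<theta> \<Otimes>\<^sub>M ?PW) ?NB (asm j) = gauss_sample (\<mu>(j := \<theta>))" for \<theta>
      by (rule gs_asm)
    have nnd: "(\<integral>\<^sup>+zw. h (asm j zw) \<partial>(gauss_n \<theta> \<Otimes>\<^sub>M ?PW)) = (\<integral>\<^sup>+X. h X \<partial>gauss_sample (\<mu>(j := \<theta>)))"
      if hm: "h \<in> borel_measurable ?NB" for h \<theta>
    proof -
      have hm': "h \<in> borel_measurable (distr (gauss_n \<theta> \<Otimes>\<^sub>M ?PW) ?NB (asm j))"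
        using hm by (simp only: measurable_cong_sets[OF sets_distr refl])
      show ?thesis using nn_integral_distr[OF ma hm'] D[of \<theta>] by simp
    qed
    have ind: "(\<integral>zw. g zw \<partial>(gauss_n \<theta> \<Otimes>\<^sub>M ?PW)) = (\<integral>X. f X j \<partial>gauss_sample (\<mu>(j := \<theta>)))" for \<theta>
      using integral_distr[OF ma fj, symmetric] D[of \<theta>] unfolding g_def by simp
    have mse: "\<forall>\<theta>. (\<integral>\<^sup>+zw. ennreal ((g zw - \<theta>)\<^sup>2) \<partial>(gauss_n \<theta> \<Otimes>\<^sub>M ?PW)) \<le> ennreal (C0 / n)"
    proof
      fix \<theta>
      have hm: "(\<lambda>X. ennreal ((f X j - \<theta>)\<^sup>2)) \<in> borel_measurable ?NB" using fj by measurable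
      have "(\<integral>\<^sup>+zw. ennreal ((g zw - \<theta>)\<^sup>2) \<partial>(gauss_n \<theta> \<Otimes>\<^sub>M ?PW))
          = (\<integral>\<^sup>+X. ennreal ((f X j - \<theta>)\<^sup>2) \<partial>gauss_sample (\<mu>(j := \<theta>)))"
        using nnd[OF hm] unfolding g_def by simp
      also have "\<dots> \<le> (\<integral>\<^sup>+X. ennreal (sqnorm (\<lambda>i. f X i - (\<mu>(j := \<theta>)) i)) \<partial>gauss_sample (\<mu>(j := \<theta>)))"
      proof (rule nn_integral_mono)
        fix X
        have "(f X j - \<theta>)\<^sup>2 = (\<lambda>i. (f X i - (\<mu>(j := \<theta>)) i)\<^sup>2) j" by simp
        also have "\<dots> \<le> sqnorm (\<lambda>i. f X i - (\<mu>(j := \<theta>)) i)"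
          unfolding sqnorm_def by (rule member_le_sum) auto
        finally show "ennreal ((f X j - \<theta>)\<^sup>2) \<le> ennreal (sqnorm (\<lambda>i. f X i - (\<mu>(j := \<theta>)) i))"
          by (rule ennreal_leI)
      qed
      also have "\<dots> \<le> ennreal (C_MSE * d / n)" using f_mse by blast
      finally show "(\<integral>\<^sup>+zw. ennreal ((g zw - \<theta>)\<^sup>2) \<partial>(gauss_n \<theta> \<Otimes>\<^sub>M ?PW)) \<le> ennreal (C0 / n)"
        unfolding C0_def .
    qed
    have H: "(\<integral>\<^sup>+\<theta>. svar (gauss_n \<theta> \<Otimes>\<^sub>M ?PW) g \<partial>\<nu>) \<ge> ennreal (c_sc / n)"
      by (rule hyp[OF prob_gs gm mse])
    have sv: "svar (gauss_n \<theta> \<Otimes>\<^sub>M ?PW) g = V j (\<mu>(j := \<theta>))" for \<theta>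
    proof -
      have hm: "(\<lambda>X. ennreal ((f X j - c)\<^sup>2)) \<in> borel_measurable ?NB" for c using fj by measurable
      show ?thesis unfolding svar_def V_def ind using nnd[OF hm] unfolding g_def by simp
    qed
    show ?thesis using H by (simp add: sv)
  qed
  have Pprob: "prob_space ?P" by (intro prob_space_PiM nu_prob)
  have SP: "sets ?P = sets ?PD" by (intro sets_PiM_cong) (auto simp: nu_sets)
  have Vm: "V j \<in> borel_measurable ?P" for j
    using meas_V[OF f_meas, of j] unfolding V_def by (simp only: measurable_cong_sets[OF SP refl])
  have stepD: "ennreal (c_sc / n) \<le> (\<integral>\<^sup>+\<mu>. V j \<mu> \<partial>?P)" for j
  proof -
    let ?Q = "PiM (UNIV - {j}) (\<lambda>_::'d. \<nu>)"
    have dist0: "distr (\<nu> \<Otimes>\<^sub>M ?Q) (PiM (insert j (UNIV - {j})) (\<lambda>_::'d. \<nu>)) (\<lambda>(x,X). X(j:=x)) = PiM (insert j (UNIV - {j})) (\<lambda>_::'d. \<nu>)"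
      using nu_prob by (intro distr_pair_PiM_eq_PiM) auto
    have e: "(\<lambda>(x,X). X(j:=x)) = (\<lambda>p. (snd p)(j := fst p))" by (auto simp: fun_eq_iff)
    have ins: "insert j (UNIV - {j}) = UNIV" by auto
    have dist: "distr (\<nu> \<Otimes>\<^sub>M ?Q) ?P (\<lambda>p. (snd p)(j := fst p)) = ?P"
      using dist0 unfolding e ins .
    have mu: "(\<lambda>p. (snd p)(j := fst p)) \<in> measurable (\<nu> \<Otimes>\<^sub>M ?Q) ?P" by (rule meas_upd)
    interpret Q: prob_space ?Q by (intro prob_space_PiM nu_prob)
    interpret pq: pair_sigma_finite \<nu> ?Q
      by (rule pair_sigma_finite.intro[OF prob_space_imp_sigma_finite[OF nu_prob] prob_space_imp_sigma_finite[OF Q.prob_space_axioms]])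
    have Vm': "V j \<in> borel_measurable (distr (\<nu> \<Otimes>\<^sub>M ?Q) ?P (\<lambda>p. (snd p)(j := fst p)))"
      using Vm by (simp only: measurable_cong_sets[OF sets_distr refl])
    have "ennreal (c_sc / n) = (\<integral>\<^sup>+X. ennreal (c_sc / n) \<partial>?Q)" by (simp add: Q.emeasure_space_1)
    also have "\<dots> \<le> (\<integral>\<^sup>+X. \<integral>\<^sup>+x. V j (X(j:=x)) \<partial>\<nu> \<partial>?Q)" by (intro nn_integral_mono stepB)
    also have "\<dots> = (\<integral>\<^sup>+p. V j ((snd p)(j := fst p)) \<partial>(\<nu> \<Otimes>\<^sub>M ?Q))"
      using pq.nn_integral_snd[OF measurable_compose[OF mu Vm]] by simp
    also have "\<dots> = (\<integral>\<^sup>+\<mu>. V j \<mu> \<partial>distr (\<nu> \<Otimes>\<^sub>M ?Q) ?P (\<lambda>p. (snd p)(j := fst p)))"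
      by (rule nn_integral_distr[OF mu Vm', symmetric])
    also have "\<dots> = (\<integral>\<^sup>+\<mu>. V j \<mu> \<partial>?P)" using dist by simp
    finally show ?thesis .
  qed
  have vs: "vvar (gauss_sample \<mu> :: ('n \<Rightarrow> 'd \<Rightarrow> real) measure) f = (\<Sum>j\<in>UNIV. V j \<mu>)" for \<mu>
    unfolding V_def by (rule vvar_split[OF f_meas])
  have Fm: "(\<lambda>\<mu>. vvar (gauss_sample \<mu> :: ('n \<Rightarrow> 'd \<Rightarrow> real) measure) f) \<in> borel_measurable ?P"
    unfolding vs by (intro borel_measurable_sum Vm)
  have stepE: "ennreal (c_sc * d / n) \<le> (\<integral>\<^sup>+\<mu>. vvar (gauss_sample \<mu> :: ('n \<Rightarrow> 'd \<Rightarrow> real) measure) f \<partial>?P)"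
  proof -
    have s1: "(\<Sum>j\<in>(UNIV::'d set). c_sc / n) = c_sc * d / n" by (simp add: d_def)
    have "ennreal (c_sc * d / n) = (\<Sum>j\<in>(UNIV::'d set). ennreal (c_sc / n))"
      unfolding s1[symmetric] using c_pos n_pos by (intro sum_ennreal[symmetric]) simp
    also have "\<dots> \<le> (\<Sum>j\<in>UNIV. \<integral>\<^sup>+\<mu>. V j \<mu> \<partial>?P)" by (intro sum_mono stepD)
    also have "\<dots> = (\<integral>\<^sup>+\<mu>. (\<Sum>j\<in>UNIV. V j \<mu>) \<partial>?P)"
      by (rule nn_integral_sum[symmetric]) (auto intro: Vm)
    finally show ?thesis unfolding vs .
  qed
  show ?thesis
  proof (rule ccontr)
    assume "\<not> ?thesis"
    hence lt: "\<And>\<mu>. vvar (gauss_sample \<mu> :: ('n \<Rightarrow> 'd \<Rightarrow> real) measure) f < ennreal (c_sc * d / n)"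
      by (auto simp: not_le)
    interpret P: prob_space ?P by (rule Pprob)
    have ci: "(\<integral>\<^sup>+\<mu>. ennreal (c_sc * d / n) \<partial>?P) = ennreal (c_sc * d / n)"
      by (simp add: P.emeasure_space_1)
    have le: "(\<integral>\<^sup>+\<mu>. vvar (gauss_sample \<mu> :: ('n \<Rightarrow> 'd \<Rightarrow> real) measure) f \<partial>?P) \<le> (\<integral>\<^sup>+\<mu>. ennreal (c_sc * d / n) \<partial>?P)"
      by (intro nn_integral_mono less_imp_le lt)
    have "(\<integral>\<^sup>+\<mu>. vvar (gauss_sample \<mu> :: ('n \<Rightarrow> 'd \<Rightarrow> real) measure) f \<partial>?P) < (\<integral>\<^sup>+\<mu>. ennreal (c_sc * d / n) \<partial>?P)"
    proof (rule nn_integral_less[OF Fm measurable_const])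
      show "(\<integral>\<^sup>+\<mu>. vvar (gauss_sample \<mu> :: ('n \<Rightarrow> 'd \<Rightarrow> real) measure) f \<partial>?P) \<noteq> \<infinity>"
        using le ci by (auto simp: top_unique)
      show "AE x in ?P. vvar (gauss_sample x :: ('n \<Rightarrow> 'd \<Rightarrow> real) measure) f \<le> ennreal (c_sc * d / n)"
        by (intro AE_I2 less_imp_le lt)
      show "\<not> (AE x in ?P. ennreal (c_sc * d / n) \<le> vvar (gauss_sample x :: ('n \<Rightarrow> 'd \<Rightarrow> real) measure) f)"
      proof
        assume "AE x in ?P. ennreal (c_sc * d / n) \<le> vvar (gauss_sample x :: ('n \<Rightarrow> 'd \<Rightarrow> real) measure) f"
        hence "AE x in ?P. False"
          by (rule AE_mp) (intro AE_I2 impI, use lt in \<open>auto simp: not_le[symmetric]\<close>)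
        thus False by simp
      qed
    qed simp
    thus False using stepE ci by simp
  qed
qed

end
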